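(* The vector field $\xi$ is Killing with respect to $g$ (i.e. $\mathcal L_\xi g=0$, so that $(L,\varphi,\xi,\eta,g)$ is a K-contact B-metric manifold) if and only if $(L,\varphi,\xi,\eta,g)\in\mathcal{F}_1\oplus\mathcal{F}_8\oplus\mathcal{F}_{10}$.
   Context: Let $L$ be a 3-dimensional real connected Lie group with Lie algebra $\mathfrak l$, and let $\{E_0,E_1,E_2\}$ be a basis of left-invariant vector fields, with $[E_i,E_j]=C_{ij}^kE_k$. Define the left-invariant almost contact structure $(\varphi,\xi,\eta)$ by $\varphi E_0=0$, $\varphi E_1=E_2$, $\varphi E_2=-E_1$, $\xi=E_0$, $\eta(E_0)=1$, $\eta(E_1)=\eta(E_2)=0$, and the left-invariant pseudo-Riemannian metric $g$ by $g(E_0,E_0)=g(E_1,E_1)=-g(E_2,E_2)=1$, $g(E_i,E_j)=0$ for $i\neq j$. Let $\nabla$ be the Levi-Civita connection of $g$, $F(x,y,z)=g((\nabla_x\varphi)y,z)$, and $F_{ijk}=F(E_i,E_j,E_k)$. The manifold belongs to $\mathcal{F}_1\oplus\mathcal{F}_8\oplus\mathcal{F}_{10}$ iff all $F_{ijk}$ vanish except possibly $F_{111}=F_{122}$, $F_{211}=F_{222}$, $F_{101}=F_{110}=F_{202}=F_{220}$, and $F_{011}=F_{022}$. *)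

theory Defs
  imports Complex_Main
begin

text \<open>Left-invariant data on a 3-dimensional Lie group L, expressed on the Lie algebra
  with respect to the basis E0, E1, E2 (indices are natural numbers below 3).
  Structure constants: [E_i,E_j] = sum_k C i j k E_k.\<close>

definition lie_structure :: "(nat \<Rightarrow> nat \<Rightarrow> nat \<Rightarrow> real) \<Rightarrow> bool" where
  "lie_structure C \<longleftrightarrow>
     (\<forall>i<3. \<forall>j<3. \<forall>k<3. C i j k = - C j i k) \<and>
     (\<forall>i<3. \<forall>j<3. \<forall>k<3. \<forall>l<3.
        (\<Sum>m<3. C i j m * C m k l + C j k m * C m i l + C k i m * C m j l) = 0)"

definition gB :: "nat \<Rightarrow> nat \<Rightarrow> real" where
  "gB i j = (if i \<noteq> j then 0 else if i = 2 then -1 else 1)"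

text \<open>phi E_j = sum_k phiB j k E_k: phi E0 = 0, phi E1 = E2, phi E2 = -E1.\<close>
definition phiB :: "nat \<Rightarrow> nat \<Rightarrow> real" where
  "phiB j k = (if j = 1 \<and> k = 2 then 1 else if j = 2 \<and> k = 1 then -1 else 0)"

text \<open>Christoffel symbols of a left-invariant connection: nabla_{E_i} E_j = sum_k Gam i j k E_k.
  Levi-Civita: torsion-free and metric (for left-invariant fields, E_i(g(E_j,E_k)) = 0).\<close>
definition levi_civita :: "(nat \<Rightarrow> nat \<Rightarrow> nat \<Rightarrow> real) \<Rightarrow> (nat \<Rightarrow> nat \<Rightarrow> nat \<Rightarrow> real) \<Rightarrow> bool" where
  "levi_civita C Gam \<longleftrightarrow>
     (\<forall>i<3. \<forall>j<3. \<forall>k<3. Gam i j k - Gam j i k = C i j k) \<and>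
     (\<forall>i<3. \<forall>j<3. \<forall>k<3. (\<Sum>m<3. Gam i j m * gB m k) + (\<Sum>m<3. Gam i k m * gB j m) = 0)"

text \<open>F_ijk = g((nabla_{E_i} phi) E_j, E_k) = g(nabla_{E_i}(phi E_j) - phi(nabla_{E_i} E_j), E_k).\<close>
definition Fcomp :: "(nat \<Rightarrow> nat \<Rightarrow> nat \<Rightarrow> real) \<Rightarrow> nat \<Rightarrow> nat \<Rightarrow> nat \<Rightarrow> real" where
  "Fcomp Gam i j k =
     (\<Sum>b<3. ((\<Sum>a<3. phiB j a * Gam i a b) - (\<Sum>a<3. Gam i j a * phiB a b)) * gB b k)"

text \<open>Lie derivative of g along xi = E0 on left-invariant fields:
  (L_xi g)(E_i,E_j) = E0(g(E_i,E_j)) - g([E0,E_i],E_j) - g(E_i,[E0,E_j]),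
  where the first term vanishes since g(E_i,E_j) is constant.\<close>
definition lie_deriv_xi_g :: "(nat \<Rightarrow> nat \<Rightarrow> nat \<Rightarrow> real) \<Rightarrow> nat \<Rightarrow> nat \<Rightarrow> real" where
  "lie_deriv_xi_g C i j = - (\<Sum>m<3. C 0 i m * gB m j) - (\<Sum>m<3. C 0 j m * gB i m)"

definition xi_Killing :: "(nat \<Rightarrow> nat \<Rightarrow> nat \<Rightarrow> real) \<Rightarrow> bool" where
  "xi_Killing C \<longleftrightarrow> (\<forall>i<3. \<forall>j<3. lie_deriv_xi_g C i j = 0)"

definition F1810_support :: "(nat \<times> nat \<times> nat) set" where
  "F1810_support = {(1,1,1),(1,2,2),(2,1,1),(2,2,2),(1,0,1),(1,1,0),(2,0,2),(2,2,0),(0,1,1),(0,2,2)}"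

definition in_F1_F8_F10 :: "(nat \<Rightarrow> nat \<Rightarrow> nat \<Rightarrow> real) \<Rightarrow> bool" where
  "in_F1_F8_F10 F \<longleftrightarrow>
     (\<forall>i<3. \<forall>j<3. \<forall>k<3. (i,j,k) \<notin> F1810_support \<longrightarrow> F i j k = 0) \<and>
     F 1 1 1 = F 1 2 2 \<and> F 2 1 1 = F 2 2 2 \<and>
     F 1 0 1 = F 1 1 0 \<and> F 1 1 0 = F 2 0 2 \<and> F 2 0 2 = F 2 2 0 \<and>
     F 0 1 1 = F 0 2 2"

end

theory Submission
  imports Defs
begin

lemma all3: "(\<forall>i<(3::nat). P i) = (P 0 \<and> P 1 \<and> P 2)"
  by (auto simp: numeral_3_eq_3 less_Suc_eq numeral_2_eq_2)

lemma sum3: "(\<Sum>i<(3::nat). f i) = f 0 + f 1 + f (2::nat)"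
  by (simp add: numeral_3_eq_3 numeral_2_eq_2)

lemma facts:
  assumes LC: "levi_civita C Gam" and LS: "lie_structure C"
  shows     "Gam 0 0 0 - Gam 0 0 0 = C 0 0 0"
    "Gam 0 0 1 - Gam 0 0 1 = C 0 0 1"
    "Gam 0 0 2 - Gam 0 0 2 = C 0 0 2"
    "Gam 0 1 0 - Gam 1 0 0 = C 0 1 0"
    "Gam 0 1 1 - Gam 1 0 1 = C 0 1 1"
    "Gam 0 1 2 - Gam 1 0 2 = C 0 1 2"
    "Gam 0 2 0 - Gam 2 0 0 = C 0 2 0"
    "Gam 0 2 1 - Gam 2 0 1 = C 0 2 1"
    "Gam 0 2 2 - Gam 2 0 2 = C 0 2 2"
    "Gam 1 0 0 - Gam 0 1 0 = C 1 0 0"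
    "Gam 1 0 1 - Gam 0 1 1 = C 1 0 1"
    "Gam 1 0 2 - Gam 0 1 2 = C 1 0 2"
    "Gam 1 1 0 - Gam 1 1 0 = C 1 1 0"
    "Gam 1 1 1 - Gam 1 1 1 = C 1 1 1"
    "Gam 1 1 2 - Gam 1 1 2 = C 1 1 2"
    "Gam 1 2 0 - Gam 2 1 0 = C 1 2 0"
    "Gam 1 2 1 - Gam 2 1 1 = C 1 2 1"
    "Gam 1 2 2 - Gam 2 1 2 = C 1 2 2"
    "Gam 2 0 0 - Gam 0 2 0 = C 2 0 0"
    "Gam 2 0 1 - Gam 0 2 1 = C 2 0 1"
    "Gam 2 0 2 - Gam 0 2 2 = C 2 0 2"
    "Gam 2 1 0 - Gam 1 2 0 = C 2 1 0"
    "Gam 2 1 1 - Gam 1 2 1 = C 2 1 1"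
    "Gam 2 1 2 - Gam 1 2 2 = C 2 1 2"
    "Gam 2 2 0 - Gam 2 2 0 = C 2 2 0"
    "Gam 2 2 1 - Gam 2 2 1 = C 2 2 1"
    "Gam 2 2 2 - Gam 2 2 2 = C 2 2 2"
   and     "Gam 0 0 0 + Gam 0 0 0 = 0"
    "Gam 0 0 1 + Gam 0 1 0 = 0"
    "-Gam 0 0 2 + Gam 0 2 0 = 0"
    "Gam 0 1 0 + Gam 0 0 1 = 0"
    "Gam 0 1 1 + Gam 0 1 1 = 0"
    "-Gam 0 1 2 + Gam 0 2 1 = 0"
    "Gam 0 2 0 + -Gam 0 0 2 = 0"
    "Gam 0 2 1 + -Gam 0 1 2 = 0"
    "-Gam 0 2 2 + -Gam 0 2 2 = 0"
    "Gam 1 0 0 + Gam 1 0 0 = 0"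
    "Gam 1 0 1 + Gam 1 1 0 = 0"
    "-Gam 1 0 2 + Gam 1 2 0 = 0"
    "Gam 1 1 0 + Gam 1 0 1 = 0"
    "Gam 1 1 1 + Gam 1 1 1 = 0"
    "-Gam 1 1 2 + Gam 1 2 1 = 0"
    "Gam 1 2 0 + -Gam 1 0 2 = 0"
    "Gam 1 2 1 + -Gam 1 1 2 = 0"
    "-Gam 1 2 2 + -Gam 1 2 2 = 0"
    "Gam 2 0 0 + Gam 2 0 0 = 0"
    "Gam 2 0 1 + Gam 2 1 0 = 0"
    "-Gam 2 0 2 + Gam 2 2 0 = 0"
    "Gam 2 1 0 + Gam 2 0 1 = 0"
    "Gam 2 1 1 + Gam 2 1 1 = 0"
    "-Gam 2 1 2 + Gam 2 2 1 = 0"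
    "Gam 2 2 0 + -Gam 2 0 2 = 0"
    "Gam 2 2 1 + -Gam 2 1 2 = 0"
    "-Gam 2 2 2 + -Gam 2 2 2 = 0"
   and     "C 0 0 0 = - C 0 0 0"
    "C 0 0 1 = - C 0 0 1"
    "C 0 0 2 = - C 0 0 2"
    "C 0 1 0 = - C 1 0 0"
    "C 0 1 1 = - C 1 0 1"
    "C 0 1 2 = - C 1 0 2"
    "C 0 2 0 = - C 2 0 0"
    "C 0 2 1 = - C 2 0 1"
    "C 0 2 2 = - C 2 0 2"
    "C 1 0 0 = - C 0 1 0"
    "C 1 0 1 = - C 0 1 1"
    "C 1 0 2 = - C 0 1 2"
    "C 1 1 0 = - C 1 1 0"
    "C 1 1 1 = - C 1 1 1"
    "C 1 1 2 = - C 1 1 2"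
    "C 1 2 0 = - C 2 1 0"
    "C 1 2 1 = - C 2 1 1"
    "C 1 2 2 = - C 2 1 2"
    "C 2 0 0 = - C 0 2 0"
    "C 2 0 1 = - C 0 2 1"
    "C 2 0 2 = - C 0 2 2"
    "C 2 1 0 = - C 1 2 0"
    "C 2 1 1 = - C 1 2 1"
    "C 2 1 2 = - C 1 2 2"
    "C 2 2 0 = - C 2 2 0"
    "C 2 2 1 = - C 2 2 1"
    "C 2 2 2 = - C 2 2 2"
  using assms by (simp_all add: levi_civita_def lie_structure_def all3 sum3 gB_def)

lemma g_000:
  assumes LC: "levi_civita C Gam" and LS: "lie_structure C"
  shows "Gam 0 0 0 = 0"
  using facts(1)[OF LC LS] facts(28)[OF LC LS] facts(55)[OF LC LS] by linarith

lemma g_001: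
  assumes LC: "levi_civita C Gam" and LS: "lie_structure C"
  shows "Gam 0 0 1 = - C 0 1 0"
  using facts(2)[OF LC LS] facts(4)[OF LC LS] facts(10)[OF LC LS] facts(29)[OF LC LS] facts(31)[OF LC LS] facts(37)[OF LC LS] facts(56)[OF LC LS] facts(58)[OF LC LS] facts(64)[OF LC LS] by linarith

lemma g_002:
  assumes LC: "levi_civita C Gam" and LS: "lie_structure C"
  shows "Gam 0 0 2 = C 0 2 0"
  using facts(3)[OF LC LS] facts(7)[OF LC LS] facts(19)[OF LC LS] facts(30)[OF LC LS] facts(34)[OF LC LS] facts(46)[OF LC LS] facts(57)[OF LC LS] facts(61)[OF LC LS] facts(73)[OF LC LS] by linarith

lemma g_010:
  assumes LC: "levi_civita C Gam" and LS: "lie_structure C"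
  shows "Gam 0 1 0 = C 0 1 0"
  using facts(2)[OF LC LS] facts(4)[OF LC LS] facts(10)[OF LC LS] facts(29)[OF LC LS] facts(31)[OF LC LS] facts(37)[OF LC LS] facts(56)[OF LC LS] facts(58)[OF LC LS] facts(64)[OF LC LS] by linarith

lemma g_011:
  assumes LC: "levi_civita C Gam" and LS: "lie_structure C"
  shows "Gam 0 1 1 = 0"
  using facts(5)[OF LC LS] facts(11)[OF LC LS] facts(13)[OF LC LS] facts(32)[OF LC LS] facts(38)[OF LC LS] facts(40)[OF LC LS] facts(59)[OF LC LS] facts(65)[OF LC LS] facts(67)[OF LC LS] by linarith

lemma g_012:
  assumes LC: "levi_civita C Gam" and LS: "lie_structure C"
  shows "Gam 0 1 2 = (1/2) * C 0 1 2 + (1/2) * C 0 2 1 + (1/2) * C 1 2 0"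
  using facts(6)[OF LC LS] facts(8)[OF LC LS] facts(12)[OF LC LS] facts(16)[OF LC LS] facts(20)[OF LC LS] facts(22)[OF LC LS] facts(33)[OF LC LS] facts(35)[OF LC LS] facts(39)[OF LC LS] facts(43)[OF LC LS] facts(47)[OF LC LS] facts(49)[OF LC LS] facts(60)[OF LC LS] facts(62)[OF LC LS] facts(66)[OF LC LS] facts(70)[OF LC LS] facts(74)[OF LC LS] facts(76)[OF LC LS] by linarith

lemma g_020:
  assumes LC: "levi_civita C Gam" and LS: "lie_structure C"
  shows "Gam 0 2 0 = C 0 2 0"
  using facts(3)[OF LC LS] facts(7)[OF LC LS] facts(19)[OF LC LS] facts(30)[OF LC LS] facts(34)[OF LC LS] facts(46)[OF LC LS] facts(57)[OF LC LS] facts(61)[OF LC LS] facts(73)[OF LC LS] by linarith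

lemma g_021:
  assumes LC: "levi_civita C Gam" and LS: "lie_structure C"
  shows "Gam 0 2 1 = (1/2) * C 0 1 2 + (1/2) * C 0 2 1 + (1/2) * C 1 2 0"
  using facts(6)[OF LC LS] facts(8)[OF LC LS] facts(12)[OF LC LS] facts(16)[OF LC LS] facts(20)[OF LC LS] facts(22)[OF LC LS] facts(33)[OF LC LS] facts(35)[OF LC LS] facts(39)[OF LC LS] facts(43)[OF LC LS] facts(47)[OF LC LS] facts(49)[OF LC LS] facts(60)[OF LC LS] facts(62)[OF LC LS] facts(66)[OF LC LS] facts(70)[OF LC LS] facts(74)[OF LC LS] facts(76)[OF LC LS] by linarith

lemma g_022:
  assumes LC: "levi_civita C Gam" and LS: "lie_structure C"
  shows "Gam 0 2 2 = 0"
  using facts(9)[OF LC LS] facts(21)[OF LC LS] facts(25)[OF LC LS] facts(36)[OF LC LS] facts(48)[OF LC LS] facts(52)[OF LC LS] facts(63)[OF LC LS] facts(75)[OF LC LS] facts(79)[OF LC LS] by linarith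

lemma g_100:
  assumes LC: "levi_civita C Gam" and LS: "lie_structure C"
  shows "Gam 1 0 0 = 0"
  using facts(2)[OF LC LS] facts(4)[OF LC LS] facts(10)[OF LC LS] facts(29)[OF LC LS] facts(31)[OF LC LS] facts(37)[OF LC LS] facts(56)[OF LC LS] facts(58)[OF LC LS] facts(64)[OF LC LS] by linarith

lemma g_101:
  assumes LC: "levi_civita C Gam" and LS: "lie_structure C"
  shows "Gam 1 0 1 = - C 0 1 1"
  using facts(5)[OF LC LS] facts(11)[OF LC LS] facts(13)[OF LC LS] facts(32)[OF LC LS] facts(38)[OF LC LS] facts(40)[OF LC LS] facts(59)[OF LC LS] facts(65)[OF LC LS] facts(67)[OF LC LS] by linarith

lemma g_102:
  assumes LC: "levi_civita C Gam" and LS: "lie_structure C"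
  shows "Gam 1 0 2 = - (1/2) * C 0 1 2 + (1/2) * C 0 2 1 + (1/2) * C 1 2 0"
  using facts(6)[OF LC LS] facts(8)[OF LC LS] facts(12)[OF LC LS] facts(16)[OF LC LS] facts(20)[OF LC LS] facts(22)[OF LC LS] facts(33)[OF LC LS] facts(35)[OF LC LS] facts(39)[OF LC LS] facts(43)[OF LC LS] facts(47)[OF LC LS] facts(49)[OF LC LS] facts(60)[OF LC LS] facts(62)[OF LC LS] facts(66)[OF LC LS] facts(70)[OF LC LS] facts(74)[OF LC LS] facts(76)[OF LC LS] by linarith

lemma g_110:
  assumes LC: "levi_civita C Gam" and LS: "lie_structure C"
  shows "Gam 1 1 0 = C 0 1 1"
  using facts(5)[OF LC LS] facts(11)[OF LC LS] facts(13)[OF LC LS] facts(32)[OF LC LS] facts(38)[OF LC LS] facts(40)[OF LC LS] facts(59)[OF LC LS] facts(65)[OF LC LS] facts(67)[OF LC LS] by linarith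

lemma g_111:
  assumes LC: "levi_civita C Gam" and LS: "lie_structure C"
  shows "Gam 1 1 1 = 0"
  using facts(14)[OF LC LS] facts(41)[OF LC LS] facts(68)[OF LC LS] by linarith

lemma g_112:
  assumes LC: "levi_civita C Gam" and LS: "lie_structure C"
  shows "Gam 1 1 2 = C 1 2 1"
  using facts(15)[OF LC LS] facts(17)[OF LC LS] facts(23)[OF LC LS] facts(42)[OF LC LS] facts(44)[OF LC LS] facts(50)[OF LC LS] facts(69)[OF LC LS] facts(71)[OF LC LS] facts(77)[OF LC LS] by linarith

lemma g_120:
  assumes LC: "levi_civita C Gam" and LS: "lie_structure C"
  shows "Gam 1 2 0 = - (1/2) * C 0 1 2 + (1/2) * C 0 2 1 + (1/2) * C 1 2 0"
  using facts(6)[OF LC LS] facts(8)[OF LC LS] facts(12)[OF LC LS] facts(16)[OF LC LS] facts(20)[OF LC LS] facts(22)[OF LC LS] facts(33)[OF LC LS] facts(35)[OF LC LS] facts(39)[OF LC LS] facts(43)[OF LC LS] facts(47)[OF LC LS] facts(49)[OF LC LS] facts(60)[OF LC LS] facts(62)[OF LC LS] facts(66)[OF LC LS] facts(70)[OF LC LS] facts(74)[OF LC LS] facts(76)[OF LC LS] by linarith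

lemma g_121:
  assumes LC: "levi_civita C Gam" and LS: "lie_structure C"
  shows "Gam 1 2 1 = C 1 2 1"
  using facts(15)[OF LC LS] facts(17)[OF LC LS] facts(23)[OF LC LS] facts(42)[OF LC LS] facts(44)[OF LC LS] facts(50)[OF LC LS] facts(69)[OF LC LS] facts(71)[OF LC LS] facts(77)[OF LC LS] by linarith

lemma g_122:
  assumes LC: "levi_civita C Gam" and LS: "lie_structure C"
  shows "Gam 1 2 2 = 0"
  using facts(18)[OF LC LS] facts(24)[OF LC LS] facts(26)[OF LC LS] facts(45)[OF LC LS] facts(51)[OF LC LS] facts(53)[OF LC LS] facts(72)[OF LC LS] facts(78)[OF LC LS] facts(80)[OF LC LS] by linarith

lemma g_200:
  assumes LC: "levi_civita C Gam" and LS: "lie_structure C"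
  shows "Gam 2 0 0 = 0"
  using facts(3)[OF LC LS] facts(7)[OF LC LS] facts(19)[OF LC LS] facts(30)[OF LC LS] facts(34)[OF LC LS] facts(46)[OF LC LS] facts(57)[OF LC LS] facts(61)[OF LC LS] facts(73)[OF LC LS] by linarith

lemma g_201:
  assumes LC: "levi_civita C Gam" and LS: "lie_structure C"
  shows "Gam 2 0 1 = (1/2) * C 0 1 2 - (1/2) * C 0 2 1 + (1/2) * C 1 2 0"
  using facts(6)[OF LC LS] facts(8)[OF LC LS] facts(12)[OF LC LS] facts(16)[OF LC LS] facts(20)[OF LC LS] facts(22)[OF LC LS] facts(33)[OF LC LS] facts(35)[OF LC LS] facts(39)[OF LC LS] facts(43)[OF LC LS] facts(47)[OF LC LS] facts(49)[OF LC LS] facts(60)[OF LC LS] facts(62)[OF LC LS] facts(66)[OF LC LS] facts(70)[OF LC LS] facts(74)[OF LC LS] facts(76)[OF LC LS] by linarith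

lemma g_202:
  assumes LC: "levi_civita C Gam" and LS: "lie_structure C"
  shows "Gam 2 0 2 = - C 0 2 2"
  using facts(9)[OF LC LS] facts(21)[OF LC LS] facts(25)[OF LC LS] facts(36)[OF LC LS] facts(48)[OF LC LS] facts(52)[OF LC LS] facts(63)[OF LC LS] facts(75)[OF LC LS] facts(79)[OF LC LS] by linarith

lemma g_210:
  assumes LC: "levi_civita C Gam" and LS: "lie_structure C"
  shows "Gam 2 1 0 = - (1/2) * C 0 1 2 + (1/2) * C 0 2 1 - (1/2) * C 1 2 0"
  using facts(6)[OF LC LS] facts(8)[OF LC LS] facts(12)[OF LC LS] facts(16)[OF LC LS] facts(20)[OF LC LS] facts(22)[OF LC LS] facts(33)[OF LC LS] facts(35)[OF LC LS] facts(39)[OF LC LS] facts(43)[OF LC LS] facts(47)[OF LC LS] facts(49)[OF LC LS] facts(60)[OF LC LS] facts(62)[OF LC LS] facts(66)[OF LC LS] facts(70)[OF LC LS] facts(74)[OF LC LS] facts(76)[OF LC LS] by linarith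

lemma g_211:
  assumes LC: "levi_civita C Gam" and LS: "lie_structure C"
  shows "Gam 2 1 1 = 0"
  using facts(15)[OF LC LS] facts(17)[OF LC LS] facts(23)[OF LC LS] facts(42)[OF LC LS] facts(44)[OF LC LS] facts(50)[OF LC LS] facts(69)[OF LC LS] facts(71)[OF LC LS] facts(77)[OF LC LS] by linarith

lemma g_212:
  assumes LC: "levi_civita C Gam" and LS: "lie_structure C"
  shows "Gam 2 1 2 = - C 1 2 2"
  using facts(18)[OF LC LS] facts(24)[OF LC LS] facts(26)[OF LC LS] facts(45)[OF LC LS] facts(51)[OF LC LS] facts(53)[OF LC LS] facts(72)[OF LC LS] facts(78)[OF LC LS] facts(80)[OF LC LS] by linarith

lemma g_220:
  assumes LC: "levi_civita C Gam" and LS: "lie_structure C"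
  shows "Gam 2 2 0 = - C 0 2 2"
  using facts(9)[OF LC LS] facts(21)[OF LC LS] facts(25)[OF LC LS] facts(36)[OF LC LS] facts(48)[OF LC LS] facts(52)[OF LC LS] facts(63)[OF LC LS] facts(75)[OF LC LS] facts(79)[OF LC LS] by linarith

lemma g_221:
  assumes LC: "levi_civita C Gam" and LS: "lie_structure C"
  shows "Gam 2 2 1 = - C 1 2 2"
  using facts(18)[OF LC LS] facts(24)[OF LC LS] facts(26)[OF LC LS] facts(45)[OF LC LS] facts(51)[OF LC LS] facts(53)[OF LC LS] facts(72)[OF LC LS] facts(78)[OF LC LS] facts(80)[OF LC LS] by linarith

lemma g_222:
  assumes LC: "levi_civita C Gam" and LS: "lie_structure C"
  shows "Gam 2 2 2 = 0"
  using facts(27)[OF LC LS] facts(54)[OF LC LS] facts(81)[OF LC LS] by linarith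

lemma canon:
  assumes LC: "levi_civita C Gam" and LS: "lie_structure C"
  shows "C 0 0 0 = 0"
    "C 0 0 1 = 0"
    "C 0 0 2 = 0"
    "C 1 0 0 = - C 0 1 0"
    "C 1 0 1 = - C 0 1 1"
    "C 1 0 2 = - C 0 1 2"
    "C 1 1 0 = 0"
    "C 1 1 1 = 0"
    "C 1 1 2 = 0"
    "C 2 0 0 = - C 0 2 0"
    "C 2 0 1 = - C 0 2 1"
    "C 2 0 2 = - C 0 2 2"
    "C 2 1 0 = - C 1 2 0"
    "C 2 1 1 = - C 1 2 1"
    "C 2 1 2 = - C 1 2 2"
    "C 2 2 0 = 0"
    "C 2 2 1 = 0"
    "C 2 2 2 = 0"
  using facts(55)[OF LC LS] facts(56)[OF LC LS] facts(57)[OF LC LS] facts(64)[OF LC LS] facts(65)[OF LC LS] facts(66)[OF LC LS] facts(67)[OF LC LS] facts(68)[OF LC LS] facts(69)[OF LC LS] facts(73)[OF LC LS] facts(74)[OF LC LS] facts(75)[OF LC LS] facts(76)[OF LC LS] facts(77)[OF LC LS] facts(78)[OF LC LS] facts(79)[OF LC LS] facts(80)[OF LC LS] facts(81)[OF LC LS] by linarith+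

lemma F_vals:
  assumes LC: "levi_civita C Gam" and LS: "lie_structure C"
  shows     "Fcomp Gam 0 0 0 = 0"
    "Fcomp Gam 0 0 1 = C 0 2 0"
    "Fcomp Gam 0 0 2 = - C 0 1 0"
    "Fcomp Gam 0 1 0 = C 0 2 0"
    "Fcomp Gam 0 1 1 = C 0 1 2 + C 0 2 1 + C 1 2 0"
    "Fcomp Gam 0 1 2 = 0"
    "Fcomp Gam 0 2 0 = - C 0 1 0"
    "Fcomp Gam 0 2 1 = 0"
    "Fcomp Gam 0 2 2 = C 0 1 2 + C 0 2 1 + C 1 2 0"
    "Fcomp Gam 1 0 0 = 0"
    "Fcomp Gam 1 0 1 = - (1/2) * C 0 1 2 + (1/2) * C 0 2 1 + (1/2) * C 1 2 0"
    "Fcomp Gam 1 0 2 = - C 0 1 1"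
    "Fcomp Gam 1 1 0 = - (1/2) * C 0 1 2 + (1/2) * C 0 2 1 + (1/2) * C 1 2 0"
    "Fcomp Gam 1 1 1 = 2 * C 1 2 1"
    "Fcomp Gam 1 1 2 = 0"
    "Fcomp Gam 1 2 0 = - C 0 1 1"
    "Fcomp Gam 1 2 1 = 0"
    "Fcomp Gam 1 2 2 = 2 * C 1 2 1"
    "Fcomp Gam 2 0 0 = 0"
    "Fcomp Gam 2 0 1 = - C 0 2 2"
    "Fcomp Gam 2 0 2 = (1/2) * C 0 1 2 - (1/2) * C 0 2 1 + (1/2) * C 1 2 0"
    "Fcomp Gam 2 1 0 = - C 0 2 2"
    "Fcomp Gam 2 1 1 = - 2 * C 1 2 2"
    "Fcomp Gam 2 1 2 = 0"
    "Fcomp Gam 2 2 0 = (1/2) * C 0 1 2 - (1/2) * C 0 2 1 + (1/2) * C 1 2 0"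
    "Fcomp Gam 2 2 1 = 0"
    "Fcomp Gam 2 2 2 = - 2 * C 1 2 2"
  using g_000[OF LC LS] g_001[OF LC LS] g_002[OF LC LS] g_010[OF LC LS] g_011[OF LC LS] g_012[OF LC LS] g_020[OF LC LS] g_021[OF LC LS] g_022[OF LC LS] g_100[OF LC LS] g_101[OF LC LS] g_102[OF LC LS] g_110[OF LC LS] g_111[OF LC LS] g_112[OF LC LS] g_120[OF LC LS] g_121[OF LC LS] g_122[OF LC LS] g_200[OF LC LS] g_201[OF LC LS] g_202[OF LC LS] g_210[OF LC LS] g_211[OF LC LS] g_212[OF LC LS] g_220[OF LC LS] g_221[OF LC LS] g_222[OF LC LS] by (simp_all add: Fcomp_def sum3 gB_def phiB_def algebra_simps)

theorem theorem2p6: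
  fixes C Gam :: "nat \<Rightarrow> nat \<Rightarrow> nat \<Rightarrow> real"
  assumes "lie_structure C"
    and "levi_civita C Gam"
  shows "xi_Killing C \<longleftrightarrow> in_F1_F8_F10 (Fcomp Gam)"
proof -
  note FV = F_vals[OF assms(2,1)]
  have K: "xi_Killing C \<longleftrightarrow> C 0 1 0 = 0 \<and> C 0 2 0 = 0 \<and> C 0 1 1 = 0 \<and> C 0 2 2 = 0 \<and> C 0 1 2 = C 0 2 1"
    unfolding xi_Killing_def lie_deriv_xi_g_def all3 sum3 gB_def canon[OF assms(2,1)] by auto
  have F: "in_F1_F8_F10 (Fcomp Gam) \<longleftrightarrow> C 0 1 0 = 0 \<and> C 0 2 0 = 0 \<and> C 0 1 1 = 0 \<and> C 0 2 2 = 0 \<and> C 0 1 2 = C 0 2 1"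
    unfolding in_F1_F8_F10_def F1810_support_def all3 FV by auto
  show ?thesis using K F by simp
qed

end
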